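(* Let $\mathcal{P}=\langle V_{\mathcal{P}},F_{\mathcal{P}}\rangle$ be a declassification policy, with public view $\Delta^{\mathcal{P}}_{P},\Gamma^{\mathcal{P}}_{P}$ (defined in the context). Let $e$ be a term containing no type variables (i.e. $\delta(e)$ is syntactically equal to $e$ for every type substitution $\delta$), and suppose $\Delta^{\mathcal{P}}_{P},\Gamma^{\mathcal{P}}_{P}\vdash e:\tau$. Then $e$ is $\mathrm{TRNI}(\mathcal{P},\tau)$, i.e. $\Gamma^{\mathcal{P}}_{C}\vdash e$ (e is typable in the confidential view), $\Delta^{\mathcal{P}}_{P}\vdash\tau$, and for all term substitutions $\langle\gamma_1,\gamma_2\rangle\in I[\mathcal{P}]$ we have $\langle\gamma_1(e),\gamma_2(e)\rangle\in I[\tau]^{ev}$.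
   Context: Language (simply typed call-by-value lambda calculus with type variables). Types $\tau::=\mathbf{int}\mid\alpha\mid\tau_1\times\tau_2\mid\tau_1\to\tau_2$; values $v::=n\mid\langle v,v\rangle\mid\lambda x:\tau.e$ ($n$ integer literals); terms $e::=x\mid v\mid\langle e,e\rangle\mid\pi_i e\mid e_1e_2$; the language is assumed to include primitive arithmetic operators $e\oplus e$ on $\mathbf{int}$ whose applications to well-typed arguments terminate. Evaluation contexts $E::=[.]\mid\langle E,e\rangle\mid\langle v,E\rangle\mid\pi_iE\mid E\,e\mid v\,E$; reduction: $\pi_i\langle v_1,v_2\rangle\to v_i$, $(\lambda x:\tau.e)v\to e[x\mapsto v]$, and $E[e]\to E[e']$ if $e\to e'$; $\to^*$ is the reflexive transitive closure. Typing judgments $\Delta,\Gamma\vdash e:\tau$ ($\Delta$ a set of type variables, $\Gamma$ a map from term variables to types well-formed in $\Delta$) are the standard ones for int literals, variables, pairs, projections, abstraction and application. $\Gamma\vdash e$ means $\Gamma\vdash e:\tau$ for some $\tau$; $\Delta\vdash\tau$ means all type variables of $\tau$ are in $\Delta$. Policy: $\mathcal{P}=\langle V_{\mathcal{P}},F_{\mathcal{P}}\rangle$ where $V_{\mathcal{P}}$ is a finite set of variables (confidential inputs) and $F_{\mathcal{P}}$ is a partial map from $V_{\mathcal{P}}$ to declassification functions $f=\lambda x:\mathbf{int}.e$, each a closed term of type $\mathbf{int}\to\tau_f$ for a closed type $\tau_f$. Let $V_\top=V_{\mathcal{P}}\setminus\mathrm{dom}(F_{\mathcal{P}})$. Confidential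 view: $\Gamma^{\mathcal{P}}_C=\{x:\mathbf{int}\mid x\in V_\top\}\cup\bigcup_{x\in\mathrm{dom}F_{\mathcal{P}},F_{\mathcal{P}}(x)=f}\{x:\mathbf{int},\,x_f:\mathbf{int}\to\tau_f\}$. Public view: $\Delta^{\mathcal{P}}_P=\{\alpha_x\mid x\in V_\top\}\cup\{\alpha_f\mid F_{\mathcal{P}}(x)=f\}$ and $\Gamma^{\mathcal{P}}_P=\{x:\alpha_x\mid x\in V_\top\}\cup\{x:\alpha_f,\,x_f:\alpha_f\to\tau_f\mid F_{\mathcal{P}}(x)=f\}$. All variables $x_f,\alpha_x,\alpha_f$ are fresh and pairwise distinct as appropriate. Let $\delta_{\mathcal{P}}$ be the type substitution mapping every $\alpha_x$ and $\alpha_f$ in $\Delta^{\mathcal{P}}_P$ to $\mathbf{int}$. Indistinguishability, for $\tau$ with $\Delta^{\mathcal{P}}_P\vdash\tau$, defined inductively: $\langle n,n\rangle\in I[\mathbf{int}]$; $\langle\langle v_1,v_2\rangle,\langle v_1',v_2'\rangle\rangle\in I[\tau_1\times\tau_2]$ if $\langle v_1,v_1'\rangle\in I[\tau_1]$ and $\langle v_2,v_2'\rangle\in I[\tau_2]$; $\langle v_1,v_2\rangle\in I[\tau_1\to\tau_2]$ if for all $\langle v_1',v_2'\rangle\in I[\tau_1]$, $\langle v_1v_1',v_2v_2'\rangle\in I[\tau_2]^{ev}$; $\langle v_1,v_2\rangle\in I[\alpha_x]$ if $\vdash v_1,v_2:\mathbf{int}$; $\langle v_1,v_2\rangle\in I[\alpha_f]$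 if $\vdash v_1,v_2:\mathbf{int}$ and $\langle f\,v_1,f\,v_2\rangle\in I[\tau_f]^{ev}$; $\langle e_1,e_2\rangle\in I[\tau]^{ev}$ if $\vdash e_1,e_2:\delta_{\mathcal{P}}(\tau)$, $e_1\to^*v_1$, $e_2\to^*v_2$ and $\langle v_1,v_2\rangle\in I[\tau]$. A term substitution $\gamma$ (finite map from term variables to closed values) respects $\Gamma$ if $\mathrm{dom}\gamma=\mathrm{dom}\Gamma$ and $\vdash\gamma(x):\Gamma(x)$ for all $x$. $\langle\gamma_1,\gamma_2\rangle\in I[\mathcal{P}]$ iff both $\gamma_i$ respect $\delta_{\mathcal{P}}(\Gamma^{\mathcal{P}}_P)$ (the context $\Gamma^{\mathcal{P}}_P$ with $\delta_{\mathcal{P}}$ applied to each type), $\gamma_1(x_f)=\gamma_2(x_f)=f$ for every $x_f\in\mathrm{dom}\Gamma^{\mathcal{P}}_P$, and $\langle\gamma_1(x),\gamma_2(x)\rangle\in I[\Gamma^{\mathcal{P}}_P(x)]$ for every other $x\in\mathrm{dom}\Gamma^{\mathcal{P}}_P$. *)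

theory Defs
  imports Main
begin

type_synonym vname = string
type_synonym tyvar = string

datatype ty = TInt | TVar tyvar | Prod ty ty | Fun ty ty

datatype "term" =
    Var vname
  | Lit int
  | Pair "term" "term"
  | Proj1 "term"
  | Proj2 "term"
  | Lam vname ty "term"
  | App "term" "term"
  | Op "int \<Rightarrow> int \<Rightarrow> int" "term" "term"

fun is_val :: "term \<Rightarrow> bool" where
  "is_val (Lit n) = True"
| "is_val (Pair v1 v2) = (is_val v1 \<and> is_val v2)"
| "is_val (Lam x t e) = True"
| "is_val _ = False"

fun tyvars :: "ty \<Rightarrow> tyvar set" where
  "tyvars TInt = {}"
| "tyvars (TVar a) = {a}"
| "tyvars (Prod t1 t2) = tyvars t1 \<union> tyvars t2"
| "tyvars (Fun t1 t2) = tyvars t1 \<union> tyvars t2"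

definition wf_ty :: "tyvar set \<Rightarrow> ty \<Rightarrow> bool" where
  "wf_ty \<Delta> t \<longleftrightarrow> tyvars t \<subseteq> \<Delta>"

fun tsubst_ty :: "(tyvar \<Rightarrow> ty) \<Rightarrow> ty \<Rightarrow> ty" where
  "tsubst_ty \<delta> TInt = TInt"
| "tsubst_ty \<delta> (TVar a) = \<delta> a"
| "tsubst_ty \<delta> (Prod t1 t2) = Prod (tsubst_ty \<delta> t1) (tsubst_ty \<delta> t2)"
| "tsubst_ty \<delta> (Fun t1 t2) = Fun (tsubst_ty \<delta> t1) (tsubst_ty \<delta> t2)"

fun tsubst :: "(tyvar \<Rightarrow> ty) \<Rightarrow> term \<Rightarrow> term" where
  "tsubst \<delta> (Var x) = Var x"
| "tsubst \<delta> (Lit n) = Lit n"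
| "tsubst \<delta> (Pair e1 e2) = Pair (tsubst \<delta> e1) (tsubst \<delta> e2)"
| "tsubst \<delta> (Proj1 e) = Proj1 (tsubst \<delta> e)"
| "tsubst \<delta> (Proj2 e) = Proj2 (tsubst \<delta> e)"
| "tsubst \<delta> (Lam x t e) = Lam x (tsubst_ty \<delta> t) (tsubst \<delta> e)"
| "tsubst \<delta> (App e1 e2) = App (tsubst \<delta> e1) (tsubst \<delta> e2)"
| "tsubst \<delta> (Op f e1 e2) = Op f (tsubst \<delta> e1) (tsubst \<delta> e2)"

section \<open>Term substitution (only ever used with closed values)\<close>

fun msubst :: "(vname \<rightharpoonup> term) \<Rightarrow> term \<Rightarrow> term" where
  "msubst \<gamma> (Var x) = (case \<gamma> x of Some v \<Rightarrow> v | None \<Rightarrow> Var x)"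
| "msubst \<gamma> (Lit n) = Lit n"
| "msubst \<gamma> (Pair e1 e2) = Pair (msubst \<gamma> e1) (msubst \<gamma> e2)"
| "msubst \<gamma> (Proj1 e) = Proj1 (msubst \<gamma> e)"
| "msubst \<gamma> (Proj2 e) = Proj2 (msubst \<gamma> e)"
| "msubst \<gamma> (Lam x t e) = Lam x t (msubst (\<gamma>(x := None)) e)"
| "msubst \<gamma> (App e1 e2) = App (msubst \<gamma> e1) (msubst \<gamma> e2)"
| "msubst \<gamma> (Op f e1 e2) = Op f (msubst \<gamma> e1) (msubst \<gamma> e2)"

definition subst :: "vname \<Rightarrow> term \<Rightarrow> term \<Rightarrow> term" where
  "subst x v e = msubst [x \<mapsto> v] e"

section \<open>Call-by-value reduction (evaluation contexts unfolded into congruence rules)\<close>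

inductive step :: "term \<Rightarrow> term \<Rightarrow> bool" where
  proj1: "is_val v1 \<Longrightarrow> is_val v2 \<Longrightarrow> step (Proj1 (Pair v1 v2)) v1"
| proj2: "is_val v1 \<Longrightarrow> is_val v2 \<Longrightarrow> step (Proj2 (Pair v1 v2)) v2"
| beta: "is_val v \<Longrightarrow> step (App (Lam x t e) v) (subst x v e)"
| op: "step (Op f (Lit n1) (Lit n2)) (Lit (f n1 n2))"
| pair1: "step e e' \<Longrightarrow> step (Pair e e2) (Pair e' e2)"
| pair2: "is_val v \<Longrightarrow> step e e' \<Longrightarrow> step (Pair v e) (Pair v e')"
| proj1c: "step e e' \<Longrightarrow> step (Proj1 e) (Proj1 e')"
| proj2c: "step e e' \<Longrightarrow> step (Proj2 e) (Proj2 e')"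
| app1: "step e e' \<Longrightarrow> step (App e e2) (App e' e2)"
| app2: "is_val v \<Longrightarrow> step e e' \<Longrightarrow> step (App v e) (App v e')"
| op1: "step e e' \<Longrightarrow> step (Op f e e2) (Op f e' e2)"
| op2: "is_val v \<Longrightarrow> step e e' \<Longrightarrow> step (Op f v e) (Op f v e')"

abbreviation steps :: "term \<Rightarrow> term \<Rightarrow> bool" where
  "steps \<equiv> step\<^sup>*\<^sup>*"

inductive typing :: "tyvar set \<Rightarrow> (vname \<rightharpoonup> ty) \<Rightarrow> term \<Rightarrow> ty \<Rightarrow> bool" where
  t_lit: "typing \<Delta> \<Gamma> (Lit n) TInt"
| t_var: "\<Gamma> x = Some t \<Longrightarrow> typing \<Delta> \<Gamma> (Var x) t"
| t_pair: "typing \<Delta> \<Gamma> e1 t1 \<Longrightarrow> typing \<Delta> \<Gamma> e2 t2 \<Longrightarrow> typing \<Delta> \<Gamma> (Pair e1 e2) (Prod t1 t2)"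
| t_proj1: "typing \<Delta> \<Gamma> e (Prod t1 t2) \<Longrightarrow> typing \<Delta> \<Gamma> (Proj1 e) t1"
| t_proj2: "typing \<Delta> \<Gamma> e (Prod t1 t2) \<Longrightarrow> typing \<Delta> \<Gamma> (Proj2 e) t2"
| t_lam: "wf_ty \<Delta> t1 \<Longrightarrow> typing \<Delta> (\<Gamma>(x \<mapsto> t1)) e t2 \<Longrightarrow> typing \<Delta> \<Gamma> (Lam x t1 e) (Fun t1 t2)"
| t_app: "typing \<Delta> \<Gamma> e1 (Fun t1 t2) \<Longrightarrow> typing \<Delta> \<Gamma> e2 t1 \<Longrightarrow> typing \<Delta> \<Gamma> (App e1 e2) t2"
| t_op: "typing \<Delta> \<Gamma> e1 TInt \<Longrightarrow> typing \<Delta> \<Gamma> e2 TInt \<Longrightarrow> typing \<Delta> \<Gamma> (Op f e1 e2) TInt"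

definition ev_rel :: "(tyvar \<Rightarrow> ty) \<Rightarrow> ty \<Rightarrow> (term \<Rightarrow> term \<Rightarrow> bool) \<Rightarrow> term \<Rightarrow> term \<Rightarrow> bool" where
  "ev_rel \<delta> t R e1 e2 \<longleftrightarrow>
     typing {} Map.empty e1 (tsubst_ty \<delta> t) \<and> typing {} Map.empty e2 (tsubst_ty \<delta> t) \<and>
     (\<exists>v1 v2. steps e1 v1 \<and> is_val v1 \<and> steps e2 v2 \<and> is_val v2 \<and> R v1 v2)"

text \<open>Generic value relation I[\<tau>], parametrised by the interpretation \<sigma> of
  type variables and the type substitution \<delta> used in the evaluation closure.\<close>
primrec indist :: "(tyvar \<Rightarrow> term \<Rightarrow> term \<Rightarrow> bool) \<Rightarrow> (tyvar \<Rightarrow> ty) \<Rightarrow> ty \<Rightarrow> term \<Rightarrow> term \<Rightarrow> bool" where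
  "indist \<sigma> \<delta> TInt v1 v2 = (\<exists>n. v1 = Lit n \<and> v2 = Lit n)"
| "indist \<sigma> \<delta> (TVar a) v1 v2 = \<sigma> a v1 v2"
| "indist \<sigma> \<delta> (Prod t1 t2) v1 v2 =
     (\<exists>a b a' b'. v1 = Pair a b \<and> v2 = Pair a' b' \<and> indist \<sigma> \<delta> t1 a a' \<and> indist \<sigma> \<delta> t2 b b')"
| "indist \<sigma> \<delta> (Fun t1 t2) v1 v2 =
     (is_val v1 \<and> is_val v2 \<and>
      (\<forall>w1 w2. indist \<sigma> \<delta> t1 w1 w2 \<longrightarrow> ev_rel \<delta> t2 (indist \<sigma> \<delta> t2) (App v1 w1) (App v2 w2)))"

text \<open>Indistinguishability for closed types (no type variables occur).\<close>
definition indist_closed :: "ty \<Rightarrow> term \<Rightarrow> term \<Rightarrow> bool" where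
  "indist_closed t = indist (\<lambda>_ _ _. False) TVar t"

text \<open>A policy is given by V (confidential variables) and a partial map F from V
  to pairs (f, \<tau>_f) of a declassification function and its (closed) result type.\<close>
definition wf_policy :: "vname set \<Rightarrow> (vname \<rightharpoonup> term \<times> ty) \<Rightarrow> bool" where
  "wf_policy V F \<longleftrightarrow> finite V \<and> dom F \<subseteq> V \<and>
     (\<forall>x f tf. F x = Some (f, tf) \<longrightarrow>
        (\<exists>y b. f = Lam y TInt b) \<and> typing {} Map.empty f (Fun TInt tf) \<and> tyvars tf = {})"

text \<open>Fresh names: a x is the type variable \<alpha>_x (x \<in> V_top) resp. \<alpha>_f (F x = f);
  xf x is the term variable x_f.\<close>
definition naming_ok :: "vname set \<Rightarrow> (vname \<rightharpoonup> term \<times> ty) \<Rightarrow> (vname \<Rightarrow> tyvar) \<Rightarrow> (vname \<Rightarrow> vname) \<Rightarrow> bool" where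
  "naming_ok V F a xf \<longleftrightarrow>
     (\<forall>x\<in>V. \<forall>y\<in>V. a x = a y \<longrightarrow> x = y \<or> (x \<in> dom F \<and> y \<in> dom F \<and> F x = F y)) \<and>
     (\<forall>x\<in>dom F. xf x \<notin> V) \<and>
     (\<forall>x\<in>dom F. \<forall>y\<in>dom F. xf x = xf y \<longrightarrow> a x = a y)"

definition Delta_P :: "vname set \<Rightarrow> (vname \<Rightarrow> tyvar) \<Rightarrow> tyvar set" where
  "Delta_P V a = a ` V"

definition Gamma_P :: "vname set \<Rightarrow> (vname \<rightharpoonup> term \<times> ty) \<Rightarrow> (vname \<Rightarrow> tyvar) \<Rightarrow> (vname \<Rightarrow> vname) \<Rightarrow> vname \<rightharpoonup> ty" where
  "Gamma_P V F a xf z =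
     (if z \<in> V then Some (TVar (a z))
      else if \<exists>x\<in>dom F. xf x = z then
        (let x = (SOME x. x \<in> dom F \<and> xf x = z) in Some (Fun (TVar (a x)) (snd (the (F x)))))
      else None)"

definition Gamma_C :: "vname set \<Rightarrow> (vname \<rightharpoonup> term \<times> ty) \<Rightarrow> (vname \<Rightarrow> vname) \<Rightarrow> vname \<rightharpoonup> ty" where
  "Gamma_C V F xf z =
     (if z \<in> V then Some TInt
      else if \<exists>x\<in>dom F. xf x = z then
        (let x = (SOME x. x \<in> dom F \<and> xf x = z) in Some (Fun TInt (snd (the (F x)))))
      else None)"

definition delta_P :: "vname set \<Rightarrow> (vname \<Rightarrow> tyvar) \<Rightarrow> tyvar \<Rightarrow> ty" where
  "delta_P V a \<alpha> = (if \<alpha> \<in> a ` V then TInt else TVar \<alpha>)"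

definition sigma_P :: "vname set \<Rightarrow> (vname \<rightharpoonup> term \<times> ty) \<Rightarrow> (vname \<Rightarrow> tyvar) \<Rightarrow> tyvar \<Rightarrow> term \<Rightarrow> term \<Rightarrow> bool" where
  "sigma_P V F a \<alpha> v1 v2 \<longleftrightarrow>
     is_val v1 \<and> is_val v2 \<and> typing {} Map.empty v1 TInt \<and> typing {} Map.empty v2 TInt \<and>
     (\<forall>x\<in>dom F. a x = \<alpha> \<longrightarrow>
        (case the (F x) of (f, tf) \<Rightarrow> ev_rel TVar tf (indist_closed tf) (App f v1) (App f v2)))"

definition I_P :: "vname set \<Rightarrow> (vname \<rightharpoonup> term \<times> ty) \<Rightarrow> (vname \<Rightarrow> tyvar) \<Rightarrow> ty \<Rightarrow> term \<Rightarrow> term \<Rightarrow> bool" where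
  "I_P V F a = indist (sigma_P V F a) (delta_P V a)"

definition I_P_ev :: "vname set \<Rightarrow> (vname \<rightharpoonup> term \<times> ty) \<Rightarrow> (vname \<Rightarrow> tyvar) \<Rightarrow> ty \<Rightarrow> term \<Rightarrow> term \<Rightarrow> bool" where
  "I_P_ev V F a t = ev_rel (delta_P V a) t (I_P V F a t)"

definition respects_ctx :: "(vname \<rightharpoonup> term) \<Rightarrow> (vname \<rightharpoonup> ty) \<Rightarrow> bool" where
  "respects_ctx \<gamma> \<Gamma> \<longleftrightarrow> dom \<gamma> = dom \<Gamma> \<and>
     (\<forall>x t. \<Gamma> x = Some t \<longrightarrow> (\<exists>v. \<gamma> x = Some v \<and> is_val v \<and> typing {} Map.empty v t))"

definition I_subst :: "vname set \<Rightarrow> (vname \<rightharpoonup> term \<times> ty) \<Rightarrow> (vname \<Rightarrow> tyvar) \<Rightarrow> (vname \<Rightarrow> vname)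
    \<Rightarrow> (vname \<rightharpoonup> term) \<Rightarrow> (vname \<rightharpoonup> term) \<Rightarrow> bool" where
  "I_subst V F a xf \<gamma>1 \<gamma>2 \<longleftrightarrow>
     respects_ctx \<gamma>1 (map_option (tsubst_ty (delta_P V a)) \<circ> Gamma_P V F a xf) \<and>
     respects_ctx \<gamma>2 (map_option (tsubst_ty (delta_P V a)) \<circ> Gamma_P V F a xf) \<and>
     (\<forall>x\<in>dom F. \<gamma>1 (xf x) = Some (fst (the (F x))) \<and> \<gamma>2 (xf x) = Some (fst (the (F x)))) \<and>
     (\<forall>x\<in>V. I_P V F a (TVar (a x)) (the (\<gamma>1 x)) (the (\<gamma>2 x)))"

definition TRNI :: "vname set \<Rightarrow> (vname \<rightharpoonup> term \<times> ty) \<Rightarrow> (vname \<Rightarrow> tyvar) \<Rightarrow> (vname \<Rightarrow> vname)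
    \<Rightarrow> term \<Rightarrow> ty \<Rightarrow> bool" where
  "TRNI V F a xf e t \<longleftrightarrow>
     (\<exists>t'. typing {} (Gamma_C V F xf) e t') \<and>
     wf_ty (Delta_P V a) t \<and>
     (\<forall>\<gamma>1 \<gamma>2. I_subst V F a xf \<gamma>1 \<gamma>2 \<longrightarrow> I_P_ev V F a t (msubst \<gamma>1 e) (msubst \<gamma>2 e))"

end

theory Submission
  imports Defs
begin

fun fv :: "term \<Rightarrow> vname set" where
  "fv (Var x) = {x}"
| "fv (Lit n) = {}"
| "fv (Pair e1 e2) = fv e1 \<union> fv e2"
| "fv (Proj1 e) = fv e"
| "fv (Proj2 e) = fv e"
| "fv (Lam x t e) = fv e - {x}"
| "fv (App e1 e2) = fv e1 \<union> fv e2"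
| "fv (Op f e1 e2) = fv e1 \<union> fv e2"

lemma typing_fv: "typing D G e t \<Longrightarrow> fv e \<subseteq> dom G"
proof (induction rule: typing.induct)
  case (t_lam D t1 G x e t2)
  have "dom (G(x \<mapsto> t1)) = insert x (dom G)" by simp
  then show ?case using t_lam.IH by (auto simp del: fun_upd_apply)
qed auto

lemma msubst_closed: "(\<forall>x\<in>fv e. g x = None) \<Longrightarrow> msubst g e = e"
  by (induction e arbitrary: g) auto

lemma msubst_empty: "msubst Map.empty e = e"
  by (simp add: msubst_closed)

lemma msubst_comp:
  "(\<forall>x v. g x = Some v \<longrightarrow> fv v = {}) \<Longrightarrow>
   msubst g' (msubst g e) = msubst (\<lambda>y. case g y of None \<Rightarrow> g' y | Some v \<Rightarrow> Some v) e"
proof (induction e arbitrary: g g')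
  case (Var x)
  then show ?case by (auto split: option.splits simp: msubst_closed)
next
  case (Lam x t e)
  have "(\<lambda>y. case (g(x:=None)) y of None \<Rightarrow> (g'(x:=None)) y | Some v \<Rightarrow> Some v)
      = (\<lambda>y. case g y of None \<Rightarrow> g' y | Some v \<Rightarrow> Some v)(x:=None)"
    by (rule ext) (auto split: option.splits)
  moreover have "\<forall>y v. (g(x:=None)) y = Some v \<longrightarrow> fv v = {}" using Lam.prems by auto
  ultimately show ?case using Lam.IH by simp
qed auto

lemma typing_weaken: "typing D G e t \<Longrightarrow> G \<subseteq>\<^sub>m G' \<Longrightarrow> D \<subseteq> D' \<Longrightarrow> typing D' G' e t"
proof (induction arbitrary: G' D' rule: typing.induct)
  case (t_var G x t D)
  then show ?case by (auto intro!: typing.t_var simp: map_le_def dom_def)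
next
  case (t_lam D t1 G x e t2)
  have "typing D' (G'(x \<mapsto> t1)) e t2"
    using t_lam.IH[OF map_le_upd[OF t_lam.prems(1)] t_lam.prems(2)] .
  then show ?case using t_lam.hyps t_lam.prems by (auto intro!: typing.intros simp: wf_ty_def)
next
  case (t_app D G e1 t1 t2 e2) then show ?case by (meson typing.t_app)
qed (auto intro: typing.intros)

lemma tyvars_tsubst: "(\<forall>\<alpha>\<in>tyvars t. tyvars (d \<alpha>) = {}) \<Longrightarrow> tyvars (tsubst_ty d t) = {}"
  by (induction t) auto

lemma tsubst_ty_TVar[simp]: "tsubst_ty TVar t = t"
  by (induction t) auto

lemma tsubst_TVar[simp]: "tsubst TVar e = e"
  by (induction e) auto

lemma tsubst_ty_closed: "tyvars t = {} \<Longrightarrow> tsubst_ty d t = t"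
  by (induction t) auto

lemma typing_tsubst:
  "typing D G e t \<Longrightarrow> (\<forall>\<alpha>\<in>D. tyvars (d \<alpha>) = {}) \<Longrightarrow>
   typing {} (map_option (tsubst_ty d) \<circ> G) (tsubst d e) (tsubst_ty d t)"
proof (induction rule: typing.induct)
  case (t_lam D t1 G x e t2)
  have "wf_ty {} (tsubst_ty d t1)" using t_lam tyvars_tsubst[of t1 d]
    by (auto simp: wf_ty_def)
  moreover have "map_option (tsubst_ty d) \<circ> G(x \<mapsto> t1) = (map_option (tsubst_ty d) \<circ> G)(x \<mapsto> tsubst_ty d t1)"
    by (rule ext) auto
  moreover have "typing {} (map_option (tsubst_ty d) \<circ> G(x \<mapsto> t1)) (tsubst d e) (tsubst_ty d t2)"
    using t_lam by blast
  ultimately have "typing {} ((map_option (tsubst_ty d) \<circ> G)(x \<mapsto> tsubst_ty d t1)) (tsubst d e) (tsubst_ty d t2)"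
    by (simp only:)
  then show ?case unfolding tsubst.simps tsubst_ty.simps
    by (rule typing.t_lam[OF \<open>wf_ty {} (tsubst_ty d t1)\<close>])
qed (auto intro: typing.intros)

lemma typing_msubst:
  "typing D G e t \<Longrightarrow> (\<forall>x v T. g x = Some v \<longrightarrow> G x = Some T \<longrightarrow> typing {} Map.empty v T) \<Longrightarrow>
   typing D (\<lambda>x. if g x = None then G x else None) (msubst g e) t"
proof (induction arbitrary: g rule: typing.induct)
  case (t_var G x t D)
  then show ?case
  proof (cases "g x")
    case None
    then show ?thesis using t_var by (auto intro: typing.t_var)
  next
    case (Some v)
    then have "typing {} Map.empty v t" using t_var by auto
    then have "typing D (\<lambda>x. if g x = None then G x else None) v t"
      by (rule typing_weaken) auto
    then show ?thesis using Some by simp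
  qed
next
  case (t_lam D t1 G x e t2)
  have "(\<lambda>y. if (g(x:=None)) y = None then (G(x \<mapsto> t1)) y else None)
     = (\<lambda>y. if g y = None then G y else None)(x \<mapsto> t1)" (is "?L = ?R") by (rule ext) auto
  moreover have "\<forall>y v T. (g(x:=None)) y = Some v \<longrightarrow> (G(x \<mapsto> t1)) y = Some T \<longrightarrow> typing {} Map.empty v T"
    using t_lam.prems by auto
  then have "typing D ?L (msubst (g(x:=None)) e) t2" using t_lam.IH by blast
  ultimately have "typing D ?R (msubst (g(x:=None)) e) t2" by (simp only:)
  then show ?case unfolding msubst.simps by (rule typing.t_lam[OF t_lam.hyps(1)])
qed (auto intro: typing.intros)

lemma typing_wf: "typing D G e t \<Longrightarrow> (\<forall>x T. G x = Some T \<longrightarrow> wf_ty D T) \<Longrightarrow> wf_ty D t"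
  by (induction rule: typing.induct) (auto simp: wf_ty_def)

inductive_cases tyLit: "typing D G (Lit n) t"
inductive_cases tyVar: "typing D G (Var x) t"
inductive_cases tyPair: "typing D G (Pair e1 e2) t"
inductive_cases tyProj1: "typing D G (Proj1 e) t"
inductive_cases tyProj2: "typing D G (Proj2 e) t"
inductive_cases tyLam: "typing D G (Lam x t1 e) t"
inductive_cases tyApp: "typing D G (App e1 e2) t"
inductive_cases tyOp: "typing D G (Op f e1 e2) t"

lemma typing_unique: "typing D G e t \<Longrightarrow> typing D' G e t' \<Longrightarrow> t = t'"
proof (induction arbitrary: D' t' rule: typing.induct)
  case (t_proj1 D G e t1 t2) then show ?case by (blast elim: tyProj1)
next
  case (t_proj2 D G e t1 t2) then show ?case by (blast elim: tyProj2)
next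
  case (t_app D G e1 t1 t2 e2) then show ?case by (blast elim: tyApp)
next
  case (t_lit D G n) from t_lit.prems show ?case by (rule tyLit) simp
next
  case (t_var G x t D) from t_var.prems show ?case by (rule tyVar) (simp add: t_var.hyps)
next
  case (t_pair D G e1 t1 e2 t2) from t_pair.prems show ?case by (rule tyPair) (metis t_pair.IH)
next
  case (t_lam D t1 G x e t2) from t_lam.prems show ?case by (rule tyLam) (metis t_lam.IH)
next
  case (t_op D G e1 e2 f) from t_op.prems show ?case by (rule tyOp) simp
qed

lemma steps_pair1: "steps e e' \<Longrightarrow> steps (Pair e e2) (Pair e' e2)"
  by (induction rule: rtranclp_induct) (auto intro: rtranclp.rtrancl_into_rtrancl step.intros)
lemma steps_pair2: "steps e e' \<Longrightarrow> is_val v \<Longrightarrow> steps (Pair v e) (Pair v e')"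
  by (induction rule: rtranclp_induct) (auto intro: rtranclp.rtrancl_into_rtrancl step.intros)
lemma steps_proj1: "steps e e' \<Longrightarrow> steps (Proj1 e) (Proj1 e')"
  by (induction rule: rtranclp_induct) (auto intro: rtranclp.rtrancl_into_rtrancl step.intros)
lemma steps_proj2: "steps e e' \<Longrightarrow> steps (Proj2 e) (Proj2 e')"
  by (induction rule: rtranclp_induct) (auto intro: rtranclp.rtrancl_into_rtrancl step.intros)
lemma steps_app1: "steps e e' \<Longrightarrow> steps (App e e2) (App e' e2)"
  by (induction rule: rtranclp_induct) (auto intro: rtranclp.rtrancl_into_rtrancl step.intros)
lemma steps_app2: "steps e e' \<Longrightarrow> is_val v \<Longrightarrow> steps (App v e) (App v e')"
  by (induction rule: rtranclp_induct) (auto intro: rtranclp.rtrancl_into_rtrancl step.intros)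
lemma steps_op1: "steps e e' \<Longrightarrow> steps (Op f e e2) (Op f e' e2)"
  by (induction rule: rtranclp_induct) (auto intro: rtranclp.rtrancl_into_rtrancl step.intros)
lemma steps_op2: "steps e e' \<Longrightarrow> is_val v \<Longrightarrow> steps (Op f v e) (Op f v e')"
  by (induction rule: rtranclp_induct) (auto intro: rtranclp.rtrancl_into_rtrancl step.intros)

lemma indist_closed_ty:
  "tyvars t = {} \<Longrightarrow> indist s d t = indist s' d' t \<and> tsubst_ty d t = tsubst_ty d' t"
proof (induction t)
  case (Fun t1 t2)
  then show ?case by (auto simp: ev_rel_def fun_eq_iff)
qed (auto simp: fun_eq_iff)

definition goodenv :: "tyvar set \<Rightarrow> (tyvar \<Rightarrow> term \<Rightarrow> term \<Rightarrow> bool) \<Rightarrow> (tyvar \<Rightarrow> ty) \<Rightarrow> bool" where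
  "goodenv D s d \<longleftrightarrow> (\<forall>\<alpha>\<in>D. tyvars (d \<alpha>) = {} \<and> (\<exists>v1 v2. s \<alpha> v1 v2) \<and>
     (\<forall>v1 v2. s \<alpha> v1 v2 \<longrightarrow> is_val v1 \<and> is_val v2 \<and> typing {} Map.empty v1 (d \<alpha>) \<and> typing {} Map.empty v2 (d \<alpha>)))"

lemma goodenv_closed: "goodenv D s d \<Longrightarrow> wf_ty D t \<Longrightarrow> tyvars (tsubst_ty d t) = {}"
  by (rule tyvars_tsubst) (auto simp: goodenv_def wf_ty_def)

lemma closed_val: "typing {} Map.empty v T \<Longrightarrow> fv v = {}"
  using typing_fv by fastforce

lemma AB:
  assumes "goodenv D s d"
  shows "wf_ty D t \<Longrightarrow> (\<exists>v1 v2. indist s d t v1 v2) \<and>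
    (\<forall>v1 v2. indist s d t v1 v2 \<longrightarrow> is_val v1 \<and> is_val v2 \<and>
       typing {} Map.empty v1 (tsubst_ty d t) \<and> typing {} Map.empty v2 (tsubst_ty d t))"
proof (induction t)
  case TInt
  then show ?case by (auto intro: typing.t_lit)
next
  case (TVar x)
  then show ?case using assms by (auto simp: goodenv_def wf_ty_def)
next
  case (Prod t1 t2)
  then have "wf_ty D t1" "wf_ty D t2" by (auto simp: wf_ty_def)
  with Prod.IH show ?case by (fastforce intro: typing.t_pair)
next
  case (Fun t1 t2)
  then have wf1: "wf_ty D t1" and wf2: "wf_ty D t2" by (auto simp: wf_ty_def)
  from Fun.IH(1)[OF wf1] obtain w1 w2 where w: "indist s d t1 w1 w2"
    and P1: "\<forall>v1 v2. indist s d t1 v1 v2 \<longrightarrow> is_val v1 \<and> is_val v2 \<and>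
       typing {} Map.empty v1 (tsubst_ty d t1) \<and> typing {} Map.empty v2 (tsubst_ty d t1)" by blast
  from Fun.IH(2)[OF wf2] obtain u1 u2 where u: "indist s d t2 u1 u2"
    and P2: "\<forall>v1 v2. indist s d t2 v1 v2 \<longrightarrow> is_val v1 \<and> is_val v2 \<and>
       typing {} Map.empty v1 (tsubst_ty d t2) \<and> typing {} Map.empty v2 (tsubst_ty d t2)" by blast
  define T1 where "T1 = tsubst_ty d t1"
  have wfT1: "wf_ty {} T1" using goodenv_closed[OF assms wf1] by (simp add: T1_def wf_ty_def)
  have lamok: "ev_rel d t2 (indist s d t2) (App (Lam ''x'' T1 u1) w1') (App (Lam ''x'' T1 u2) w2')"
    if "indist s d t1 w1' w2'" for w1' w2'
  proof -
    have tw: "is_val w1'" "is_val w2'" "typing {} Map.empty w1' T1" "typing {} Map.empty w2' T1"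
      using P1 that by (auto simp: T1_def)
    have tu: "typing {} Map.empty u1 (tsubst_ty d t2)" "typing {} Map.empty u2 (tsubst_ty d t2)"
      "is_val u1" "is_val u2" using P2 u by auto
    have ty: "typing {} Map.empty (App (Lam ''x'' T1 ui) wi) (tsubst_ty d t2)"
      if "typing {} Map.empty ui (tsubst_ty d t2)" "typing {} Map.empty wi T1" for ui wi
    proof -
      have "typing {} [''x'' \<mapsto> T1] ui (tsubst_ty d t2)"
        by (rule typing_weaken[OF that(1)]) auto
      then have "typing {} Map.empty (Lam ''x'' T1 ui) (Fun T1 (tsubst_ty d t2))"
        by (intro typing.t_lam wfT1) simp
      then show ?thesis using that(2) by (rule typing.t_app)
    qed
    have st: "steps (App (Lam ''x'' T1 ui) wi) ui" if "is_val wi" "typing {} Map.empty ui T" for ui wi T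
    proof -
      have "subst ''x'' wi ui = ui" unfolding subst_def
        using closed_val[OF that(2)] by (simp add: msubst_closed)
      then show ?thesis using step.beta[OF that(1), of "''x''" T1 ui] by auto
    qed
    show ?thesis unfolding ev_rel_def
      using ty[OF tu(1) tw(3)] ty[OF tu(2) tw(4)] st[OF tw(1) tu(1)] st[OF tw(2) tu(2)] tu u by blast
  qed
  have A: "indist s d (Fun t1 t2) (Lam ''x'' T1 u1) (Lam ''x'' T1 u2)"
    using lamok by simp
  have B: "is_val v1 \<and> is_val v2 \<and> typing {} Map.empty v1 (tsubst_ty d (Fun t1 t2)) \<and>
      typing {} Map.empty v2 (tsubst_ty d (Fun t1 t2))" if "indist s d (Fun t1 t2) v1 v2" for v1 v2
  proof -
    from that have ev: "ev_rel d t2 (indist s d t2) (App v1 w1) (App v2 w2)" and vv: "is_val v1" "is_val v2"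
      using w by auto
    have wt: "typing {} Map.empty w1 T1" "typing {} Map.empty w2 T1" using P1 w by (auto simp: T1_def)
    have "typing {} Map.empty vi (Fun T1 (tsubst_ty d t2))"
      if "typing {} Map.empty (App vi wi) (tsubst_ty d t2)" "typing {} Map.empty wi T1" for vi wi
      using that(1)
    proof (rule tyApp)
      fix T' assume "typing {} Map.empty vi (Fun T' (tsubst_ty d t2))" "typing {} Map.empty wi T'"
      moreover then have "T' = T1" using typing_unique that(2) by blast
      ultimately show ?thesis by simp
    qed
    then show ?thesis using ev wt vv unfolding ev_rel_def by (auto simp: T1_def)
  qed
  show ?case using A B by blast
qed

lemma msubst_typing_closed:
  assumes "typing D G e t" "tsubst d e = e" "\<forall>\<alpha>\<in>D. tyvars (d \<alpha>) = {}"
    "\<forall>x v T. g x = Some v \<longrightarrow> G x = Some T \<longrightarrow> typing {} Map.empty v (tsubst_ty d T)"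
    "dom G \<subseteq> dom g"
  shows "typing {} Map.empty (msubst g e) (tsubst_ty d t)"
proof -
  have "typing {} (map_option (tsubst_ty d) \<circ> G) e (tsubst_ty d t)"
    using typing_tsubst[OF assms(1,3)] assms(2) by simp
  then have "typing {} (\<lambda>x. if g x = None then (map_option (tsubst_ty d) \<circ> G) x else None) (msubst g e) (tsubst_ty d t)"
    by (rule typing_msubst) (use assms(4) in auto)
  moreover have "(\<lambda>x. if g x = None then (map_option (tsubst_ty d) \<circ> G) x else None) = Map.empty"
    using assms(5) by (auto simp: fun_eq_iff dom_def)
  ultimately show ?thesis by simp
qed

lemma env_typed:
  assumes "goodenv D s d" "\<forall>x T. G x = Some T \<longrightarrow> wf_ty D T" "dom g1 = dom G" "dom g2 = dom G"
    "\<forall>x T. G x = Some T \<longrightarrow> indist s d T (the (g1 x)) (the (g2 x))"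
  shows "\<forall>x v T. g1 x = Some v \<longrightarrow> G x = Some T \<longrightarrow> typing {} Map.empty v (tsubst_ty d T)"
    "\<forall>x v T. g2 x = Some v \<longrightarrow> G x = Some T \<longrightarrow> typing {} Map.empty v (tsubst_ty d T)"
    "\<forall>x v. g1 x = Some v \<longrightarrow> fv v = {}" "\<forall>x v. g2 x = Some v \<longrightarrow> fv v = {}"
proof -
  have *: "typing {} Map.empty (the (g1 x)) (tsubst_ty d T) \<and> typing {} Map.empty (the (g2 x)) (tsubst_ty d T)"
    if "G x = Some T" for x T
    using AB[OF assms(1), of T] assms(2,5) that by blast
  show "\<forall>x v T. g1 x = Some v \<longrightarrow> G x = Some T \<longrightarrow> typing {} Map.empty v (tsubst_ty d T)"
    using * by fastforce
  show "\<forall>x v T. g2 x = Some v \<longrightarrow> G x = Some T \<longrightarrow> typing {} Map.empty v (tsubst_ty d T)"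
    using * by fastforce
  show "\<forall>x v. g1 x = Some v \<longrightarrow> fv v = {}"
  proof (intro allI impI)
    fix x v assume "g1 x = Some v"
    then obtain T where "G x = Some T" using assms(3) by (metis domD domI)
    then show "fv v = {}" using * \<open>g1 x = Some v\<close> closed_val by fastforce
  qed
  show "\<forall>x v. g2 x = Some v \<longrightarrow> fv v = {}"
  proof (intro allI impI)
    fix x v assume "g2 x = Some v"
    then obtain T where "G x = Some T" using assms(4) by (metis domD domI)
    then show "fv v = {}" using * \<open>g2 x = Some v\<close> closed_val by fastforce
  qed
qed

lemma FL:
  "typing D G e t \<Longrightarrow> tsubst d e = e \<Longrightarrow> goodenv D s d \<Longrightarrow> (\<forall>x T. G x = Some T \<longrightarrow> wf_ty D T) \<Longrightarrow>
   dom g1 = dom G \<Longrightarrow> dom g2 = dom G \<Longrightarrow>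
   (\<forall>x T. G x = Some T \<longrightarrow> indist s d T (the (g1 x)) (the (g2 x))) \<Longrightarrow>
   ev_rel d t (indist s d t) (msubst g1 e) (msubst g2 e)"
proof (induction arbitrary: g1 g2 rule: typing.induct)
  case (t_lit D G n)
  then show ?case by (auto simp: ev_rel_def intro: typing.t_lit)
next
  case (t_var G x t D)
  then obtain v1 v2 where v: "g1 x = Some v1" "g2 x = Some v2"
    by (metis domD domI)
  then have "indist s d t v1 v2" using t_var.prems(6) t_var.hyps by (metis option.sel)
  moreover have "wf_ty D t" using t_var by blast
  ultimately have "is_val v1 \<and> is_val v2 \<and> typing {} Map.empty v1 (tsubst_ty d t) \<and> typing {} Map.empty v2 (tsubst_ty d t)"
    using AB[OF t_var(3), of t] by blast
  then show ?case using v \<open>indist s d t v1 v2\<close> unfolding ev_rel_def by auto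
next
  case (t_pair D G e1 t1 e2 t2)
  from t_pair.IH(1)[of g1 g2] t_pair.IH(2)[of g1 g2] t_pair.prems
  obtain v1 v2 w1 w2 where
    "steps (msubst g1 e1) v1" "is_val v1" "steps (msubst g2 e1) v2" "is_val v2" "indist s d t1 v1 v2"
    "steps (msubst g1 e2) w1" "is_val w1" "steps (msubst g2 e2) w2" "is_val w2" "indist s d t2 w1 w2"
    "typing {} Map.empty (msubst g1 e1) (tsubst_ty d t1)" "typing {} Map.empty (msubst g2 e1) (tsubst_ty d t1)"
    "typing {} Map.empty (msubst g1 e2) (tsubst_ty d t2)" "typing {} Map.empty (msubst g2 e2) (tsubst_ty d t2)"
    unfolding ev_rel_def by auto
  note f = this
  have "steps (Pair (msubst g1 e1) (msubst g1 e2)) (Pair v1 w1)"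
    using steps_pair1[OF f(1)] steps_pair2[OF f(6) f(2)] by (rule rtranclp_trans)
  moreover have "steps (Pair (msubst g2 e1) (msubst g2 e2)) (Pair v2 w2)"
    using steps_pair1[OF f(3)] steps_pair2[OF f(8) f(4)] by (rule rtranclp_trans)
  moreover have "indist s d (Prod t1 t2) (Pair v1 w1) (Pair v2 w2)" using f by simp
  moreover have "is_val (Pair v1 w1)" "is_val (Pair v2 w2)" using f by auto
  moreover have "typing {} Map.empty (msubst g1 (Pair e1 e2)) (tsubst_ty d (Prod t1 t2))"
    "typing {} Map.empty (msubst g2 (Pair e1 e2)) (tsubst_ty d (Prod t1 t2))"
    using f by (auto intro!: typing.t_pair)
  ultimately show ?case unfolding ev_rel_def msubst.simps by blast
next
  case (t_proj1 D G e t1 t2)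
  from t_proj1.IH[of g1 g2] t_proj1.prems obtain p1 p2 where P:
    "steps (msubst g1 e) p1" "steps (msubst g2 e) p2" "indist s d (Prod t1 t2) p1 p2"
    "typing {} Map.empty (msubst g1 e) (tsubst_ty d (Prod t1 t2))"
    "typing {} Map.empty (msubst g2 e) (tsubst_ty d (Prod t1 t2))"
    unfolding ev_rel_def by auto
  moreover have "wf_ty D (Prod t1 t2)" using typing_wf t_proj1 by blast
  then have "wf_ty D t1" "wf_ty D t2" by (auto simp: wf_ty_def)
  ultimately obtain a b a' b' where ab: "p1 = Pair a b" "p2 = Pair a' b'" "indist s d t1 a a'" "indist s d t2 b b'"
    and vals: "is_val a" "is_val a'" "is_val b" "is_val b'"
    using AB[OF t_proj1.prems(2)] by fastforce
  have "steps (Proj1 (msubst g1 e)) a"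
    using steps_proj1[OF \<open>steps (msubst g1 e) p1\<close>] step.proj1[of a b] ab vals by auto
  moreover have "steps (Proj1 (msubst g2 e)) a'"
    using steps_proj1[OF \<open>steps (msubst g2 e) p2\<close>] step.proj1[of a' b'] ab vals by auto
  ultimately show ?case unfolding ev_rel_def using ab vals P
    by (auto intro: typing.t_proj1)
next
  case (t_proj2 D G e t1 t2)
  from t_proj2.IH[of g1 g2] t_proj2.prems obtain p1 p2 where P:
    "steps (msubst g1 e) p1" "steps (msubst g2 e) p2" "indist s d (Prod t1 t2) p1 p2"
    "typing {} Map.empty (msubst g1 e) (tsubst_ty d (Prod t1 t2))"
    "typing {} Map.empty (msubst g2 e) (tsubst_ty d (Prod t1 t2))"
    unfolding ev_rel_def by auto
  moreover have "wf_ty D (Prod t1 t2)" using typing_wf t_proj2 by blast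
  then have "wf_ty D t1" "wf_ty D t2" by (auto simp: wf_ty_def)
  ultimately obtain a b a' b' where ab: "p1 = Pair a b" "p2 = Pair a' b'" "indist s d t1 a a'" "indist s d t2 b b'"
    and vals: "is_val a" "is_val a'" "is_val b" "is_val b'"
    using AB[OF t_proj2.prems(2)] by fastforce
  have "steps (Proj2 (msubst g1 e)) b"
    using steps_proj2[OF \<open>steps (msubst g1 e) p1\<close>] step.proj2[of a b] ab vals by auto
  moreover have "steps (Proj2 (msubst g2 e)) b'"
    using steps_proj2[OF \<open>steps (msubst g2 e) p2\<close>] step.proj2[of a' b'] ab vals by auto
  ultimately show ?case unfolding ev_rel_def using ab vals P
    by (auto intro: typing.t_proj2)
next
  case (t_app D G e1 t1 t2 e2)
  from t_app.IH(1)[of g1 g2] t_app.IH(2)[of g1 g2] t_app.prems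
  obtain v1 v2 w1 w2 where
    "steps (msubst g1 e1) v1" "steps (msubst g2 e1) v2" "indist s d (Fun t1 t2) v1 v2"
    "steps (msubst g1 e2) w1" "steps (msubst g2 e2) w2" "indist s d t1 w1 w2"
    "typing {} Map.empty (msubst g1 e1) (tsubst_ty d (Fun t1 t2))" "typing {} Map.empty (msubst g2 e1) (tsubst_ty d (Fun t1 t2))"
    "typing {} Map.empty (msubst g1 e2) (tsubst_ty d t1)" "typing {} Map.empty (msubst g2 e2) (tsubst_ty d t1)"
    unfolding ev_rel_def by auto
  moreover from calculation have "is_val v1" "is_val v2"
    "ev_rel d t2 (indist s d t2) (App v1 w1) (App v2 w2)" by auto
  ultimately obtain r1 r2 where "steps (App v1 w1) r1" "steps (App v2 w2) r2" "is_val r1" "is_val r2"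
    "indist s d t2 r1 r2" unfolding ev_rel_def by blast
  moreover have "steps (App (msubst g1 e1) (msubst g1 e2)) (App v1 w1)"
    using steps_app1[OF \<open>steps (msubst g1 e1) v1\<close>] steps_app2[OF \<open>steps (msubst g1 e2) w1\<close> \<open>is_val v1\<close>]
    by (rule rtranclp_trans)
  moreover have "steps (App (msubst g2 e1) (msubst g2 e2)) (App v2 w2)"
    using steps_app1[OF \<open>steps (msubst g2 e1) v2\<close>] steps_app2[OF \<open>steps (msubst g2 e2) w2\<close> \<open>is_val v2\<close>]
    by (rule rtranclp_trans)
  ultimately show ?case unfolding ev_rel_def using \<open>typing {} Map.empty (msubst g1 e1) (tsubst_ty d (Fun t1 t2))\<close>
    \<open>typing {} Map.empty (msubst g2 e1) (tsubst_ty d (Fun t1 t2))\<close>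
    \<open>typing {} Map.empty (msubst g1 e2) (tsubst_ty d t1)\<close> \<open>typing {} Map.empty (msubst g2 e2) (tsubst_ty d t1)\<close>
    by (auto intro: typing.t_app rtranclp_trans)
next
  case (t_op D G e1 e2 f)
  from t_op.IH(1)[of g1 g2] t_op.IH(2)[of g1 g2] t_op.prems
  obtain n m where
    "steps (msubst g1 e1) (Lit n)" "steps (msubst g2 e1) (Lit n)"
    "steps (msubst g1 e2) (Lit m)" "steps (msubst g2 e2) (Lit m)"
    "typing {} Map.empty (msubst g1 e1) TInt" "typing {} Map.empty (msubst g2 e1) TInt"
    "typing {} Map.empty (msubst g1 e2) TInt" "typing {} Map.empty (msubst g2 e2) TInt"
    unfolding ev_rel_def by auto
  moreover have "steps (Op f (msubst gi e1) (msubst gi e2)) (Lit (f n m))"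
    if "steps (msubst gi e1) (Lit n)" "steps (msubst gi e2) (Lit m)" for gi
  proof -
    have "steps (Op f (msubst gi e1) (msubst gi e2)) (Op f (Lit n) (Lit m))"
      using steps_op1[OF that(1), of f "msubst gi e2"] steps_op2[OF that(2), of "Lit n" f] by (auto intro: rtranclp_trans)
    then show ?thesis using step.op by (rule rtranclp.rtrancl_into_rtrancl)
  qed
  ultimately show ?case unfolding ev_rel_def by (auto intro!: typing.t_op exI[of _ "Lit (f n m)"])
next
  case (t_lam D t1 G x b t2)
  have ann: "tsubst_ty d t1 = t1" and bb: "tsubst d b = b" using t_lam.prems(1) by auto
  have lt: "typing D G (Lam x t1 b) (Fun t1 t2)" using t_lam.hyps by (rule typing.t_lam)
  note ET = env_typed[OF t_lam.prems(2,3,4,5,6)]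
  have clo: "\<forall>\<alpha>\<in>D. tyvars (d \<alpha>) = {}" using t_lam.prems(2) by (auto simp: goodenv_def)
  have L1: "typing {} Map.empty (msubst g1 (Lam x t1 b)) (Fun t1 (tsubst_ty d t2))"
    using msubst_typing_closed[OF lt t_lam.prems(1) clo ET(1)] t_lam.prems(4) ann by simp
  have L2: "typing {} Map.empty (msubst g2 (Lam x t1 b)) (Fun t1 (tsubst_ty d t2))"
    using msubst_typing_closed[OF lt t_lam.prems(1) clo ET(2)] t_lam.prems(5) ann by simp
  have comp: "subst x w (msubst (gi(x:=None)) b) = msubst (gi(x \<mapsto> w)) b"
    if "\<forall>y v. gi y = Some v \<longrightarrow> fv v = {}" for gi w
  proof -
    have "subst x w (msubst (gi(x:=None)) b) =
      msubst (\<lambda>y. case (gi(x:=None)) y of None \<Rightarrow> [x \<mapsto> w] y | Some v \<Rightarrow> Some v) b"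
      unfolding subst_def by (rule msubst_comp) (use that in auto)
    moreover have "(\<lambda>y. case (gi(x:=None)) y of None \<Rightarrow> [x \<mapsto> w] y | Some v \<Rightarrow> Some v) = gi(x \<mapsto> w)"
      by (auto simp: fun_eq_iff split: option.splits)
    ultimately show ?thesis by simp
  qed
  have main: "ev_rel d t2 (indist s d t2) (App (msubst g1 (Lam x t1 b)) w1) (App (msubst g2 (Lam x t1 b)) w2)"
    if wr: "indist s d t1 w1 w2" for w1 w2
  proof -
    have wv: "is_val w1" "is_val w2" "typing {} Map.empty w1 t1" "typing {} Map.empty w2 t1"
      using AB[OF t_lam.prems(2) t_lam.hyps(1)] wr ann by auto
    have IH: "ev_rel d t2 (indist s d t2) (msubst (g1(x \<mapsto> w1)) b) (msubst (g2(x \<mapsto> w2)) b)"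
    proof (rule t_lam.IH[OF bb t_lam.prems(2)])
      show "\<forall>y T. (G(x \<mapsto> t1)) y = Some T \<longrightarrow> wf_ty D T" using t_lam.prems(3) t_lam.hyps(1) by auto
      show "dom (g1(x \<mapsto> w1)) = dom (G(x \<mapsto> t1))" using t_lam.prems(4) by simp
      show "dom (g2(x \<mapsto> w2)) = dom (G(x \<mapsto> t1))" using t_lam.prems(5) by simp
      show "\<forall>y T. (G(x \<mapsto> t1)) y = Some T \<longrightarrow> indist s d T (the ((g1(x \<mapsto> w1)) y)) (the ((g2(x \<mapsto> w2)) y))"
        using t_lam.prems(6) wr by auto
    qed
    have s1: "step (App (msubst g1 (Lam x t1 b)) w1) (msubst (g1(x \<mapsto> w1)) b)"
      using step.beta[OF wv(1), of x t1 "msubst (g1(x:=None)) b"] comp[OF ET(3)] by simp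
    have s2: "step (App (msubst g2 (Lam x t1 b)) w2) (msubst (g2(x \<mapsto> w2)) b)"
      using step.beta[OF wv(2), of x t1 "msubst (g2(x:=None)) b"] comp[OF ET(4)] by simp
    show ?thesis using IH s1 s2 typing.t_app[OF L1 wv(3)] typing.t_app[OF L2 wv(4)]
      unfolding ev_rel_def by (meson converse_rtranclp_into_rtranclp)
  qed
  have I: "indist s d (Fun t1 t2) (msubst g1 (Lam x t1 b)) (msubst g2 (Lam x t1 b))"
    using main by simp
  have L1': "typing {} Map.empty (msubst g1 (Lam x t1 b)) (tsubst_ty d (Fun t1 t2))"
    and L2': "typing {} Map.empty (msubst g2 (Lam x t1 b)) (tsubst_ty d (Fun t1 t2))"
    using L1 L2 ann by simp_all
  have V: "is_val (msubst g1 (Lam x t1 b))" "is_val (msubst g2 (Lam x t1 b))" by simp_all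
  show ?case unfolding ev_rel_def using L1' L2' I V by blast
qed

lemma closed_FL: "typing {} Map.empty e t \<Longrightarrow> ev_rel TVar t (indist_closed t) e e"
  using FL[of "{}" Map.empty e t TVar "\<lambda>_ _ _. False" Map.empty Map.empty]
  by (simp add: goodenv_def msubst_empty indist_closed_def)

lemma GP_cases:
  assumes "Gamma_P V F a xf z = Some T"
  shows "(z \<in> V \<and> T = TVar (a z)) \<or>
    (z \<notin> V \<and> (\<exists>x'. x' \<in> dom F \<and> xf x' = z \<and> T = Fun (TVar (a x')) (snd (the (F x')))))"
proof (cases "z \<in> V")
  case True then show ?thesis using assms by (simp add: Gamma_P_def)
next
  case False
  then have ex: "\<exists>x\<in>dom F. xf x = z" using assms by (simp add: Gamma_P_def split: if_splits)
  define x' where "x' = (SOME x. x \<in> dom F \<and> xf x = z)"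
  have "x' \<in> dom F \<and> xf x' = z" unfolding x'_def by (rule someI_ex) (use ex in blast)
  moreover have "T = Fun (TVar (a x')) (snd (the (F x')))"
    using assms False ex by (simp add: Gamma_P_def x'_def Let_def)
  ultimately show ?thesis using False by blast
qed

theorem theorem2:
  fixes V :: "vname set" and F :: "vname \<rightharpoonup> term \<times> ty"
    and a :: "vname \<Rightarrow> tyvar" and xf :: "vname \<Rightarrow> vname"
    and e :: "term" and \<tau> :: ty
  assumes "wf_policy V F"
    and "naming_ok V F a xf"
    and "\<forall>\<delta>. tsubst \<delta> e = e"
    and "typing (Delta_P V a) (Gamma_P V F a xf) e \<tau>"
  shows "TRNI V F a xf e \<tau>"
proof -
  let ?D = "Delta_P V a" and ?G = "Gamma_P V F a xf" and ?s = "sigma_P V F a" and ?d = "delta_P V a"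
  have domF: "dom F \<subseteq> V" using assms(1) by (simp add: wf_policy_def)
  have Fx: "\<exists>y b. f = Lam y TInt b" "typing {} Map.empty f (Fun TInt tf)" "tyvars tf = {}"
    if "F x = Some (f, tf)" for x f tf using assms(1) that unfolding wf_policy_def by blast+
  have sig0: "?s \<alpha> (Lit 0) (Lit 0)" for \<alpha>
    unfolding sigma_P_def
  proof (intro conjI ballI impI)
    fix x assume "x \<in> dom F" "a x = \<alpha>"
    then obtain f tf where F: "F x = Some (f, tf)" by auto
    have "typing {} Map.empty (App f (Lit 0)) tf" using Fx(2)[OF F] by (rule typing.t_app) (rule typing.t_lit)
    then show "case the (F x) of (f, tf) \<Rightarrow> ev_rel TVar tf (indist_closed tf) (App f (Lit 0)) (App f (Lit 0))"
      using F closed_FL by simp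
  qed (auto intro: typing.t_lit)
  have ex0: "\<exists>v1 v2. ?s \<alpha> v1 v2" for \<alpha> using sig0 by blast
  have sigok: "is_val v1 \<and> is_val v2 \<and> typing {} Map.empty v1 TInt \<and> typing {} Map.empty v2 TInt"
    if "?s \<alpha> v1 v2" for \<alpha> v1 v2 using that by (simp add: sigma_P_def)
  have good: "goodenv ?D ?s ?d"
    unfolding goodenv_def using ex0 sigok by (auto simp: Delta_P_def delta_P_def)
  have wfG: "\<forall>z T. ?G z = Some T \<longrightarrow> wf_ty ?D T"
  proof (intro allI impI)
    fix z T assume "?G z = Some T"
    from GP_cases[OF this] show "wf_ty ?D T"
    proof
      assume "z \<in> V \<and> T = TVar (a z)" then show ?thesis by (auto simp: wf_ty_def Delta_P_def)
    next
      assume "z \<notin> V \<and> (\<exists>x'. x' \<in> dom F \<and> xf x' = z \<and> T = Fun (TVar (a x')) (snd (the (F x'))))"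
      then obtain x' where x': "x' \<in> dom F" "T = Fun (TVar (a x')) (snd (the (F x')))" by blast
      then obtain f tf where F: "F x' = Some (f, tf)" by auto
      show ?thesis using x' F Fx(3)[OF F] domF by (auto simp: wf_ty_def Delta_P_def)
    qed
  qed
  have ee: "tsubst ?d e = e" using assms(3) by blast
  have wft: "wf_ty ?D \<tau>" using typing_wf[OF assms(4) wfG] .
  have GC: "Gamma_C V F xf = map_option (tsubst_ty ?d) \<circ> ?G"
  proof (rule ext)
    fix z
    show "Gamma_C V F xf z = (map_option (tsubst_ty ?d) \<circ> ?G) z"
    proof (cases "?G z")
      case None then show ?thesis by (simp add: Gamma_C_def Gamma_P_def Let_def split: if_splits)
    next
      case (Some T)
      from GP_cases[OF Some] show ?thesis
      proof
        assume "z \<in> V \<and> T = TVar (a z)"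
        then show ?thesis using Some by (simp add: Gamma_C_def delta_P_def)
      next
        assume A: "z \<notin> V \<and> (\<exists>x'. x' \<in> dom F \<and> xf x' = z \<and> T = Fun (TVar (a x')) (snd (the (F x'))))"
        define x' where "x' = (SOME x. x \<in> dom F \<and> xf x = z)"
        have ex: "\<exists>x\<in>dom F. xf x = z" using A by blast
        have x': "x' \<in> dom F \<and> xf x' = z" unfolding x'_def by (rule someI_ex) (use ex in blast)
        then obtain f tf where F: "F x' = Some (f, tf)" by auto
        have "T = Fun (TVar (a x')) tf" using Some A ex F by (simp add: Gamma_P_def x'_def Let_def)
        moreover have "Gamma_C V F xf z = Some (Fun TInt tf)"
          using A ex F by (simp add: Gamma_C_def x'_def Let_def)
        moreover have "a x' \<in> a ` V" using x' domF by auto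
        ultimately show ?thesis using Some Fx(3)[OF F]
          by (simp add: delta_P_def tsubst_ty_closed)
      qed
    qed
  qed
  have clo: "\<forall>\<alpha>\<in>?D. tyvars (?d \<alpha>) = {}" using good by (simp add: goodenv_def)
  have tyC: "\<exists>t'. typing {} (Gamma_C V F xf) e t'"
    using typing_tsubst[OF assms(4) clo] ee GC by auto
  have rel: "I_P_ev V F a \<tau> (msubst g1 e) (msubst g2 e)" if I: "I_subst V F a xf g1 g2" for g1 g2
  proof -
    have r1: "respects_ctx g1 (map_option (tsubst_ty ?d) \<circ> ?G)"
      and r2: "respects_ctx g2 (map_option (tsubst_ty ?d) \<circ> ?G)"
      and fx: "\<forall>x\<in>dom F. g1 (xf x) = Some (fst (the (F x))) \<and> g2 (xf x) = Some (fst (the (F x)))"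
      and vx: "\<forall>x\<in>V. I_P V F a (TVar (a x)) (the (g1 x)) (the (g2 x))"
      using I unfolding I_subst_def by blast+
    have d1: "dom g1 = dom ?G" using r1 unfolding respects_ctx_def by (auto simp: dom_def)
    have d2: "dom g2 = dom ?G" using r2 unfolding respects_ctx_def by (auto simp: dom_def)
    have R: "\<forall>z T. ?G z = Some T \<longrightarrow> indist ?s ?d T (the (g1 z)) (the (g2 z))"
    proof (intro allI impI)
      fix z T assume "?G z = Some T"
      from GP_cases[OF this] show "indist ?s ?d T (the (g1 z)) (the (g2 z))"
      proof
        assume "z \<in> V \<and> T = TVar (a z)"
        then show ?thesis using vx by (simp add: I_P_def)
      next
        assume "z \<notin> V \<and> (\<exists>x'. x' \<in> dom F \<and> xf x' = z \<and> T = Fun (TVar (a x')) (snd (the (F x'))))"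
        then obtain x' where x': "x' \<in> dom F" "xf x' = z" "T = Fun (TVar (a x')) (snd (the (F x')))" by blast
        then obtain f tf where F: "F x' = Some (f, tf)" by auto
        have gz: "g1 z = Some f" "g2 z = Some f" using fx x'(1,2) F by force+
        have vf: "is_val f" using Fx(1)[OF F] by auto
        have "ev_rel ?d tf (indist ?s ?d tf) (App f w1) (App f w2)" if "?s (a x') w1 w2" for w1 w2
        proof -
          have "ev_rel TVar tf (indist_closed tf) (App f w1) (App f w2)"
            using that x' F unfolding sigma_P_def by fastforce
          moreover have "indist_closed tf = indist ?s ?d tf" "tsubst_ty TVar tf = tsubst_ty ?d tf"
            using indist_closed_ty[OF Fx(3)[OF F], of "\<lambda>_ _ _. False" TVar ?s ?d]
            by (simp_all add: indist_closed_def)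
          ultimately show ?thesis unfolding ev_rel_def by simp
        qed
        then show ?thesis using x' F gz vf by simp
      qed
    qed
    show ?thesis unfolding I_P_ev_def I_P_def
      by (rule FL[OF assms(4) ee good wfG d1 d2 R])
  qed
  show ?thesis unfolding TRNI_def using tyC wft rel by blast
qed

end
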